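(* Let $\alpha$ be irrational. Then, as $n\to\infty$, the Sós permutations $\beta_\alpha$ of $[n]$ satisfy $D(\beta_\alpha)=o(n)$; i.e., $\beta_\alpha$ is quasirandom.
   Context: $[n]=\{1,\dots,n\}$, identified with $\mathbb{Z}_n$; $\{x\}$ is the fractional part of $x$. For irrational $\alpha$, $\beta_\alpha$ is the permutation of $[n]$ with $\beta_\alpha(t)=|\{s\in[n]:\{\alpha s\}\le\{\alpha t\}\}|$. An interval of $\mathbb{Z}_n$ is any subset that is the image of an interval of consecutive integers under the projection $\mathbb{Z}\to\mathbb{Z}_n$ (wrap-around allowed). For $S,T\subseteq\mathbb{Z}_n$, $D_T(S)=\bigl|\,|S\cap T|-|S||T|/n\,\bigr|$, and for a permutation $\sigma$, $D(\sigma)=\max_{I,J}D_J(\sigma(I))$ over all intervals $I,J$. *)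

theory Defs
  imports Complex_Main "HOL-Library.Landau_Symbols"
begin

text \<open>[n] = {1..n}, identified with Z_n via t \<mapsto> t mod n.\<close>

definition sos_perm :: "real \<Rightarrow> nat \<Rightarrow> nat \<Rightarrow> nat" where
  "sos_perm \<alpha> n t = card {s \<in> {1..n}. frac (\<alpha> * real s) \<le> frac (\<alpha> * real t)}"

definition zn_interval :: "nat \<Rightarrow> nat set \<Rightarrow> bool" where
  "zn_interval n I \<longleftrightarrow> (\<exists>a b :: int. I = {t \<in> {1..n}. \<exists>i \<in> {a..b}. int t mod int n = i mod int n})"

definition disc :: "nat \<Rightarrow> nat set \<Rightarrow> nat set \<Rightarrow> real" where
  "disc n T S = \<bar>real (card (S \<inter> T)) - real (card S) * real (card T) / real n\<bar>"

definition perm_disc :: "nat \<Rightarrow> (nat \<Rightarrow> nat) \<Rightarrow> real" where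
  "perm_disc n \<sigma> = Max {disc n J (\<sigma> ` I) | I J. zn_interval n I \<and> zn_interval n J}"

end

theory Submission
  imports Defs "HOL-Analysis.Kronecker_Approximation_Theorem"
begin


definition fs :: "real \<Rightarrow> real" where "fs x = frac x - 1/2"
definition TT :: "real \<Rightarrow> nat \<Rightarrow> real \<Rightarrow> real" where
  "TT a L c = (\<Sum>k=1..L. fs (real k * a + c))"

lemma fs_bound: "\<bar>fs x\<bar> \<le> 1/2"
  using frac_ge_0[of x] frac_lt_1[of x] unfolding fs_def abs_le_iff by linarith

lemma fs_int: "fs (x + of_int z) = fs x"
  unfolding fs_def by simp

lemma TT_Suc: "TT a (Suc L) c = TT a L c + fs (real (Suc L) * a + c)"
  unfolding TT_def by simp

lemma TT_shift1: "TT a L c - TT a L (c + a) = fs (a + c) - fs (real (Suc L) * a + c)"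
proof (induction L)
  case 0
  then show ?case by (simp add: TT_def)
next
  case (Suc L)
  have "TT a (Suc L) c - TT a (Suc L) (c + a) = (TT a L c - TT a L (c + a)) + fs (real (Suc L) * a + c) - fs (real (Suc L) * a + (c + a))"
    by (simp add: TT_Suc)
  also have "real (Suc L) * a + (c + a) = real (Suc (Suc L)) * a + c" by (simp add: algebra_simps)
  finally show ?case using Suc by simp
qed

lemma TT_shift: "\<bar>TT a L c - TT a L (c + real m * a)\<bar> \<le> real m"
proof (induction m)
  case 0 then show ?case by simp
next
  case (Suc m)
  have e: "c + real (Suc m) * a = (c + real m * a) + a" by (simp add: algebra_simps)
  have "\<bar>TT a L (c + real m * a) - TT a L ((c + real m * a) + a)\<bar> \<le> 1"
    using TT_shift1[of a L "c + real m * a"] fs_bound[of "a + (c + real m * a)"]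
      fs_bound[of "real (Suc L) * a + (c + real m * a)"] by linarith
  then show ?case unfolding e using Suc by linarith
qed

lemma TT_int: "TT a L (c + of_int z) = TT a L c"
  unfolding TT_def by (simp add: add.assoc[symmetric] fs_int)

lemma sum_real_lessThan: "(\<Sum>j<N. real j) = real N * (real N - 1) / 2"
  by (induction N) (auto simp: field_simps)

lemma card_ge_thr:
  fixes r :: real assumes "r > 0"
  shows "real (card {j\<in>{..<N}. r \<le> real j}) = real (N - nat \<lceil>r\<rceil>)"
proof -
  have "{j\<in>{..<N}. r \<le> real j} = {nat \<lceil>r\<rceil>..<N}"
    using assms by (auto simp: ceiling_le_iff nat_le_iff)
  then show ?thesis by simp
qed

lemma sum_fs_bounds:
  assumes eta: "0 < \<eta>" "real N * \<eta> \<le> 1" "1 < (real N + 1) * \<eta>"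
  shows "-1 \<le> (\<Sum>j<N. fs (y + real j * \<eta>)) \<and> (\<Sum>j<N. fs (y + real j * \<eta>)) \<le> 3/2"
proof (cases "N = 0")
  case True then show ?thesis by simp
next
  case False
  hence N1: "real N \<ge> 1" by simp
  define z where "z = frac y"
  have z: "0 \<le> z" "z < 1" using frac_ge_0 frac_lt_1 z_def by auto
  have y: "y = z + of_int \<lfloor>y\<rfloor>" by (simp add: z_def frac_def)
  have fr: "frac (y + real j * \<eta>) = z + real j * \<eta> - (if 1 \<le> z + real j * \<eta> then 1 else 0)"
    if "j < N" for j
  proof -
    have "real j \<le> real N - 1" using that by linarith
    hence "real j * \<eta> \<le> (real N - 1) * \<eta>" using eta by (intro mult_right_mono) auto
    hence lt: "real j * \<eta> < 1" using eta by (simp add: algebra_simps)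
    have "frac (y + real j * \<eta>) = frac (z + real j * \<eta>)"
      by (subst y) (metis add.commute add.left_commute frac_add_of_int_right)
    also have "\<dots> = z + real j * \<eta> - (if 1 \<le> z + real j * \<eta> then 1 else 0)"
      using z lt eta(1) by (subst frac_unique_iff) (auto simp: zero_le_mult_iff)
    finally show ?thesis .
  qed
  define r where "r = (1 - z) / \<eta>"
  have r0: "r > 0" using z eta unfolding r_def by auto
  have cond: "(1 \<le> z + real j * \<eta>) = (r \<le> real j)" for j
    using eta(1) unfolding r_def by (auto simp: field_simps)
  define C where "C = real (N - nat \<lceil>r\<rceil>)"
  have sumeq: "(\<Sum>j<N. fs (y + real j * \<eta>)) = real N * z + \<eta> * (real N * (real N - 1) / 2) - C - real N / 2"
  proof -
    have "(\<Sum>j<N. fs (y + real j * \<eta>)) = (\<Sum>j<N. z + real j * \<eta> - 1/2 - (if r \<le> real j then 1 else 0))"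
      by (rule sum.cong) (auto simp: fs_def fr cond)
    also have "\<dots> = real N * z + \<eta> * (\<Sum>j<N. real j) - real N / 2 - (\<Sum>j<N. (if r \<le> real j then 1 else 0))"
      by (simp add: sum.distrib sum_subtractf sum_distrib_left mult.commute)
    also have "(\<Sum>j<N. (if r \<le> real j then 1 else 0::real)) = real (card {j\<in>{..<N}. r \<le> real j})"
      by (simp add: sum.If_cases Int_def conj_commute)
    also have "\<dots> = C" using card_ge_thr[OF r0] C_def by simp
    finally show ?thesis by (simp add: sum_real_lessThan)
  qed
  have ce: "r \<le> of_int \<lceil>r\<rceil>" "of_int \<lceil>r\<rceil> < r + 1" by linarith+
  have Cup: "C \<ge> real N - r - 1"
    unfolding C_def using ce r0 by (cases "nat \<lceil>r\<rceil> \<le> N") (auto simp: of_nat_diff)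
  have Clow: "C = 0 \<or> C \<le> real N - r"
  proof (cases "nat \<lceil>r\<rceil> \<le> N")
    case True
    have "C = real N - real (nat \<lceil>r\<rceil>)" unfolding C_def using True by (rule of_nat_diff)
    moreover have "real (nat \<lceil>r\<rceil>) = of_int \<lceil>r\<rceil>" using r0 by simp
    ultimately have "C = real N - of_int \<lceil>r\<rceil>" by simp
    then show ?thesis using ce by linarith
  next
    case False
    hence "N - nat \<lceil>r\<rceil> = 0" by (meson diff_is_0_eq nat_le_linear)
    then show ?thesis unfolding C_def by simp
  qed
  have inv1: "1 / \<eta> < real N + 1" using eta by (simp add: field_simps)
  have inv2: "real N \<le> 1 / \<eta>" using eta by (simp add: field_simps)
  have rup: "r \<le> (1 - z) * (real N + 1)"
  proof -
    have "r = (1 - z) * (1/\<eta>)" by (simp add: r_def)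
    also have "\<dots> \<le> (1 - z) * (real N + 1)" using inv1 z by (intro mult_left_mono) auto
    finally show ?thesis .
  qed
  have rlow: "r \<ge> (1 - z) * real N"
  proof -
    have "r = (1 - z) * (1/\<eta>)" by (simp add: r_def)
    moreover have "(1 - z) * real N \<le> (1 - z) * (1/\<eta>)" using inv2 z by (intro mult_left_mono) auto
    ultimately show ?thesis by simp
  qed
  have q1: "\<eta> * (real N * (real N - 1) / 2) \<le> (real N - 1) / 2"
  proof -
    have "\<eta> * (real N * (real N - 1) / 2) = (real N * \<eta>) * ((real N - 1) / 2)" by simp
    also have "\<dots> \<le> 1 * ((real N - 1) / 2)" using eta N1 by (intro mult_right_mono) auto
    finally show ?thesis by simp
  qed
  have q2: "\<eta> * (real N * (real N - 1) / 2) \<ge> real N / 2 - 1"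
  proof -
    have "\<eta> > 1 / (real N + 1)" using eta by (simp add: field_simps)
    hence "\<eta> * (real N * (real N - 1) / 2) \<ge> 1 / (real N + 1) * (real N * (real N - 1) / 2)"
      using N1 by (intro mult_right_mono) auto
    moreover have "1 / (real N + 1) * (real N * (real N - 1) / 2) \<ge> real N / 2 - 1"
      using N1 by (simp add: field_simps)
    ultimately show ?thesis by linarith
  qed
  have up: "(\<Sum>j<N. fs (y + real j * \<eta>)) \<le> 3/2"
  proof -
    define Q where "Q = \<eta> * (real N * (real N - 1) / 2)"
    define P where "P = real N * z"
    have a1: "r \<le> real N + 1 - P - z" using rup unfolding P_def by (simp add: algebra_simps)
    have a2: "Q \<le> (real N - 1) / 2" using q1 unfolding Q_def .
    have a3: "(\<Sum>j<N. fs (y + real j * \<eta>)) = P + Q - C - real N / 2" using sumeq unfolding P_def Q_def .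
    show ?thesis using a1 a2 a3 Cup z by (simp add: field_simps)
  qed
  have lo: "-1 \<le> (\<Sum>j<N. fs (y + real j * \<eta>))"
  proof -
    define Q where "Q = \<eta> * (real N * (real N - 1) / 2)"
    define P where "P = real N * z"
    have a1: "r \<ge> real N - P" using rlow unfolding P_def by (simp add: algebra_simps)
    have a2: "Q \<ge> real N / 2 - 1" using q2 unfolding Q_def .
    have a3: "(\<Sum>j<N. fs (y + real j * \<eta>)) = P + Q - C - real N / 2" using sumeq unfolding P_def Q_def .
    have a4: "P \<ge> 0" unfolding P_def using z by simp
    show ?thesis using a1 a2 a3 a4 Clow by (auto simp add: field_simps)
  qed
  show ?thesis using up lo by simp
qed

lemma TT_uniform:
  assumes irr: "a \<notin> \<rat>" and "\<epsilon> > 0"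
  shows "\<exists>K. \<forall>L c. \<bar>TT a L c\<bar> \<le> \<epsilon> * real L + K"
proof -
  define e where "e = min \<epsilon> 1"
  have e: "0 < e" "e \<le> 1" "e \<le> \<epsilon>" using assms(2) unfolding e_def by auto
  obtain k where k: "k > 0" "\<bar>frac (real k * a) - e/8\<bar> < e/8"
    using Kronecker_approx_1_explicit[OF irr, of "e/8" "e/8"] e by auto
  define \<eta> where "\<eta> = frac (real k * a)"
  have eta: "0 < \<eta>" "\<eta> < e/4" using k(2) unfolding \<eta>_def abs_less_iff by linarith+
  have inv4: "1/\<eta> > 4" using eta e by (simp add: field_simps)
  define N where "N = nat \<lfloor>1/\<eta>\<rfloor>"
  have f0: "0 \<le> \<lfloor>1/\<eta>\<rfloor>" using eta(1) by simp
  have rN: "real N = of_int \<lfloor>1/\<eta>\<rfloor>" unfolding N_def using f0 by (rule of_nat_nat)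
  have N1: "real N \<le> 1/\<eta>" "1/\<eta> < real N + 1" unfolding rN by linarith+
  have Neta: "real N * \<eta> \<le> 1" "1 < (real N + 1) * \<eta>" using N1 eta by (simp_all add: field_simps)
  have Npos: "real N > 0" using N1 inv4 by linarith
  have Ninv: "1 / real N \<le> e/2"
  proof -
    have "real N \<ge> 1 / (2*\<eta>)" using N1 inv4 eta by (simp add: field_simps)
    hence "1 / real N \<le> 2 * \<eta>" using Npos eta by (simp add: field_simps)
    then show ?thesis using eta by linarith
  qed
  have shiftj: "\<bar>TT a L c - TT a L (c + real j * \<eta>)\<bar> \<le> real (j*k)" for L c j
  proof -
    have "real (j*k) * a = real j * (real k * a)" by simp
    also have "real k * a = \<eta> + of_int \<lfloor>real k * a\<rfloor>" unfolding \<eta>_def by (simp add: frac_def)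
    finally have eq: "c + real (j*k) * a = (c + real j * \<eta>) + of_int (int j * \<lfloor>real k * a\<rfloor>)"
      by (simp add: algebra_simps)
    have "TT a L (c + real (j*k) * a) = TT a L (c + real j * \<eta>)" unfolding eq by (rule TT_int)
    then show ?thesis using TT_shift[of a L c "j*k"] by simp
  qed
  have swap: "(\<Sum>j<N. TT a L (c + real j * \<eta>)) = (\<Sum>m=1..L. \<Sum>j<N. fs ((real m * a + c) + real j * \<eta>))" for L c
    unfolding TT_def by (subst sum.swap) (simp add: add.assoc)
  have sumbd: "- real L \<le> (\<Sum>j<N. TT a L (c + real j * \<eta>)) \<and> (\<Sum>j<N. TT a L (c + real j * \<eta>)) \<le> 3/2 * real L" for L c
  proof -
    have b: "-1 \<le> (\<Sum>j<N. fs ((real m * a + c) + real j * \<eta>)) \<and> (\<Sum>j<N. fs ((real m * a + c) + real j * \<eta>)) \<le> 3/2" for m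
      using sum_fs_bounds[OF eta(1) Neta] by blast
    have "(\<Sum>m=1..L. \<Sum>j<N. fs ((real m * a + c) + real j * \<eta>)) \<le> (\<Sum>m=1..L. 3/2)"
      using b by (intro sum_mono) auto
    moreover have "(\<Sum>m=1..L. \<Sum>j<N. fs ((real m * a + c) + real j * \<eta>)) \<ge> (\<Sum>m=1..L. -1)"
      using b by (intro sum_mono) auto
    ultimately show ?thesis unfolding swap by simp
  qed
  have main: "\<bar>TT a L c\<bar> \<le> \<epsilon> * real L + real (N*k)" for L c
  proof -
    have jb: "TT a L (c + real j * \<eta>) - real (N*k) \<le> TT a L c \<and> TT a L c \<le> TT a L (c + real j * \<eta>) + real (N*k)" if "j < N" for j
    proof -
      have "j*k \<le> N*k" using that by simp
      hence "real (j*k) \<le> real (N*k)" by (simp only: of_nat_le_iff)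
      then show ?thesis using shiftj[of L c j] by linarith
    qed
    have "real N * TT a L c = (\<Sum>j<N. TT a L c)" by simp
    also have "\<dots> \<le> (\<Sum>j<N. TT a L (c + real j * \<eta>) + real (N*k))" using jb by (intro sum_mono) auto
    also have "\<dots> = (\<Sum>j<N. TT a L (c + real j * \<eta>)) + real N * real (N*k)" by (simp add: sum.distrib)
    finally have up: "real N * TT a L c \<le> 3/2 * real L + real N * real (N*k)" using sumbd[of L c] by linarith
    have "real N * TT a L c = (\<Sum>j<N. TT a L c)" by simp
    also have "\<dots> \<ge> (\<Sum>j<N. TT a L (c + real j * \<eta>) - real (N*k))" using jb by (intro sum_mono) auto
    moreover have "(\<Sum>j<N. TT a L (c + real j * \<eta>) - real (N*k)) = (\<Sum>j<N. TT a L (c + real j * \<eta>)) - real N * real (N*k)" by (simp add: sum_subtractf)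
    ultimately have lo: "real N * TT a L c \<ge> - real L - real N * real (N*k)" using sumbd[of L c] by linarith
    have up2: "TT a L c \<le> 3/2 * (real L / real N) + real (N*k)" using up Npos by (simp add: field_simps)
    have lo2: "TT a L c \<ge> - (real L / real N) - real (N*k)" using lo Npos by (simp add: field_simps)
    have "real L / real N = real L * (1 / real N)" by simp
    also have "\<dots> \<le> real L * (e/2)" using Ninv by (intro mult_left_mono) auto
    finally have X: "real L / real N \<le> e * real L / 2" by (simp add: mult.commute)
    have Y: "e * real L \<le> \<epsilon> * real L" using e by (intro mult_right_mono) auto
    have Z: "0 \<le> e * real L" using e by simp
    show ?thesis unfolding abs_le_iff using up2 lo2 X Y Z by (intro conjI; linarith)
  qed
  then show ?thesis by blast
qed

lemma ind_frac_lt: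
  assumes "0 \<le> v" "v \<le> 1"
  shows "(if frac x < v then 1 else 0) = v - fs x + fs (x - v)"
proof -
  have f1: "0 \<le> frac x" "frac x < 1" by (simp_all add: frac_lt_1)
  have i1: "x - v - (frac x - v + 1) = of_int (\<lfloor>x\<rfloor> - 1)" by (simp add: frac_def)
  have i2: "x - v - (frac x - v) = of_int \<lfloor>x\<rfloor>" by (simp add: frac_def)
  have "frac (x - v) = frac x - v + (if frac x < v then 1 else 0)"
  proof (cases "frac x < v")
    case True
    have "frac (x - v) = frac x - v + 1"
      unfolding frac_unique_iff
    proof (intro conjI)
      show "x - v - (frac x - v + 1) \<in> \<int>" unfolding i1 by (rule Ints_of_int)
    qed (use True f1 assms in linarith)+
    then show ?thesis using True by simp
  next
    case False
    have "frac (x - v) = frac x - v"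
      unfolding frac_unique_iff
    proof (intro conjI)
      show "x - v - (frac x - v) \<in> \<int>" unfolding i2 by (rule Ints_of_int)
    qed (use False f1 assms in linarith)+
    then show ?thesis using False by simp
  qed
  then show ?thesis unfolding fs_def by simp
qed

lemma count_formula:
  assumes "0 \<le> v" "v \<le> 1"
  shows "real (card {t\<in>{1..u}. frac (a * real t) < v}) = real u * v - TT a u 0 + TT a u (- v)"
proof -
  have "real (card {t\<in>{1..u}. frac (a * real t) < v}) = (\<Sum>t=1..u. if frac (real t * a) < v then 1 else 0)"
    by (simp add: sum.If_cases Int_def conj_commute mult.commute)
  also have "\<dots> = (\<Sum>t=1..u. v - fs (real t * a + 0) + fs (real t * a + - v))"
    using ind_frac_lt[OF assms] by simp
  also have "\<dots> = real u * v - TT a u 0 + TT a u (- v)"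
    unfolding TT_def by (simp add: sum.distrib sum_subtractf)
  finally show ?thesis .
qed

lemma count_uniform:
  assumes irr: "a \<notin> \<rat>" and "\<epsilon> > 0"
  shows "\<exists>K. \<forall>u v. 0 \<le> v \<longrightarrow> v \<le> 1 \<longrightarrow> \<bar>real (card {t\<in>{1..u}. frac (a * real t) < v}) - real u * v\<bar> \<le> \<epsilon> * real u + K"
proof -
  obtain K where K: "\<And>L c. \<bar>TT a L c\<bar> \<le> \<epsilon>/2 * real L + K" using TT_uniform[OF irr, of "\<epsilon>/2"] assms(2) by auto
  show ?thesis
  proof (intro exI allI impI)
    fix u :: nat and v :: real
    assume v: "0 \<le> v" "v \<le> 1"
    show "\<bar>real (card {t\<in>{1..u}. frac (a * real t) < v}) - real u * v\<bar> \<le> \<epsilon> * real u + 2 * K"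
      using count_formula[OF v, where a=a and u=u] K[of u 0] K[of u "-v"] by (simp add: abs_le_iff)
  qed
qed



lemma frac_inj:
  assumes irr: "a \<notin> \<rat>" and eq: "frac (a * real s) = frac (a * real t)"
  shows "s = t"
proof (rule ccontr)
  assume ne: "s \<noteq> t"
  have "frac (a * real s - a * real t) = 0" using frac_diff_eq[OF eq] .
  hence "a * real s - a * real t \<in> \<int>" by simp
  then obtain m where m: "a * real s - a * real t = of_int m" by (auto elim: Ints_cases)
  have d: "real s - real t \<noteq> 0" using ne by simp
  have "a = of_int m / (real s - real t)" using m d by (simp add: field_simps)
  hence "a \<in> \<rat>" by simp
  then show False using irr by simp
qed

lemma sos_mono:
  assumes "frac (a * real s) \<le> frac (a * real t)"
  shows "sos_perm a n s \<le> sos_perm a n t"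
  unfolding sos_perm_def using assms by (intro card_mono) auto

lemma sos_strict:
  assumes "t \<in> {1..n}" "frac (a * real s) < frac (a * real t)"
  shows "sos_perm a n s < sos_perm a n t"
proof -
  let ?A = "{s' \<in> {1..n}. frac (a * real s') \<le> frac (a * real s)}"
  let ?B = "{s' \<in> {1..n}. frac (a * real s') \<le> frac (a * real t)}"
  have "?A \<subseteq> ?B" using assms by auto
  moreover have "t \<in> ?B" "t \<notin> ?A" using assms by auto
  ultimately have "?A \<subset> ?B" by blast
  then show ?thesis unfolding sos_perm_def by (intro psubset_card_mono) auto
qed

lemma sos_range:
  assumes "t \<in> {1..n}"
  shows "sos_perm a n t \<in> {1..n}"
proof -
  have "card {s \<in> {1..n}. frac (a * real s) \<le> frac (a * real t)} \<le> card {1..n}"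
    by (intro card_mono) auto
  moreover have "card {s \<in> {1..n}. frac (a * real s) \<le> frac (a * real t)} > 0"
    using assms by (subst card_gt_0_iff) auto
  ultimately show ?thesis unfolding sos_perm_def by auto
qed

lemma sos_inj:
  assumes irr: "a \<notin> \<rat>"
  shows "inj_on (sos_perm a n) {1..n}"
proof (rule inj_onI)
  fix s t assume st: "s \<in> {1..n}" "t \<in> {1..n}" "sos_perm a n s = sos_perm a n t"
  show "s = t"
  proof (rule ccontr)
    assume "s \<noteq> t"
    hence "frac (a * real s) \<noteq> frac (a * real t)" using frac_inj[OF irr] by metis
    hence "frac (a * real s) < frac (a * real t) \<or> frac (a * real t) < frac (a * real s)" by linarith
    then show False using sos_strict[of t n a s] sos_strict[of s n a t] st by auto
  qed
qed

lemma sos_surj: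
  assumes irr: "a \<notin> \<rat>"
  shows "sos_perm a n ` {1..n} = {1..n}"
  using sos_range sos_inj[OF irr] by (intro endo_inj_surj) auto

lemma rank_prefix:
  assumes irr: "a \<notin> \<rat>" and m: "m \<le> n"
  shows "card {t\<in>{1..n}. sos_perm a n t \<le> m} = m \<and>
    (\<exists>v. 0 \<le> v \<and> v \<le> 1 \<and> {t\<in>{1..n}. sos_perm a n t \<le> m} = {t\<in>{1..n}. frac (a * real t) < v})"
proof
  define S where "S = {t\<in>{1..n}. sos_perm a n t \<le> m}"
  have "sos_perm a n ` S = {1..m}"
  proof
    show "sos_perm a n ` S \<subseteq> {1..m}" unfolding S_def using sos_range by fastforce
    show "{1..m} \<subseteq> sos_perm a n ` S"
    proof
      fix r assume r: "r \<in> {1..m}"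
      hence "r \<in> sos_perm a n ` {1..n}" using sos_surj[OF irr] m by auto
      then obtain t where "t \<in> {1..n}" "r = sos_perm a n t" by auto
      then show "r \<in> sos_perm a n ` S" unfolding S_def using r by auto
    qed
  qed
  moreover have "inj_on (sos_perm a n) S" using sos_inj[OF irr] unfolding S_def
    by (rule inj_on_subset) auto
  ultimately show "card S = m" by (metis card_image card_atLeastAtMost diff_Suc_1)
  show "\<exists>v. 0 \<le> v \<and> v \<le> 1 \<and> S = {t\<in>{1..n}. frac (a * real t) < v}"
  proof (cases "S = {1..n}")
    case True
    then show ?thesis by (intro exI[of _ 1]) (auto simp: frac_lt_1)
  next
    case False
    define R where "R = {1..n} - S"
    have R: "finite R" "R \<noteq> {}" using False unfolding R_def S_def by auto
    define v where "v = Min ((\<lambda>s. frac (a * real s)) ` R)"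
    have vin: "v \<in> (\<lambda>s. frac (a * real s)) ` R" unfolding v_def using R by (intro Min_in) auto
    have "S = {t\<in>{1..n}. frac (a * real t) < v}"
    proof (intro set_eqI iffI)
      fix t assume t: "t \<in> S"
      have "frac (a * real t) < frac (a * real s)" if s: "s \<in> R" for s
      proof (rule ccontr)
        assume "\<not> ?thesis"
        hence "sos_perm a n s \<le> sos_perm a n t" by (intro sos_mono) simp
        then show False using s t unfolding R_def S_def by auto
      qed
      hence "frac (a * real t) < v" using vin by auto
      then show "t \<in> {t\<in>{1..n}. frac (a * real t) < v}" using t unfolding S_def by auto
    next
      fix t assume t: "t \<in> {t\<in>{1..n}. frac (a * real t) < v}"
      show "t \<in> S"
      proof (rule ccontr)
        assume "t \<notin> S"
        hence "t \<in> R" using t unfolding R_def by auto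
        hence "v \<le> frac (a * real t)" unfolding v_def using R by (intro Min_le) auto
        then show False using t by auto
      qed
    qed
    moreover have "0 \<le> v" "v \<le> 1" using vin by (auto simp: less_imp_le[OF frac_lt_1])
    ultimately show ?thesis by blast
  qed
qed



definition GG :: "nat \<Rightarrow> (nat \<Rightarrow> nat) \<Rightarrow> (nat \<Rightarrow> real) \<Rightarrow> (nat \<Rightarrow> real) \<Rightarrow> real" where
  "GG n \<sigma> \<phi> \<psi> = (\<Sum>t\<in>{1..n}. \<phi> t * \<psi> (\<sigma> t)) - (\<Sum>t\<in>{1..n}. \<phi> t) * (\<Sum>r\<in>{1..n}. \<psi> r) / real n"

definition pre :: "int \<Rightarrow> nat \<Rightarrow> real" where
  "pre u t = (if int t \<le> u then 1 else 0)"

definition ind :: "nat set \<Rightarrow> nat \<Rightarrow> real" where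
  "ind I t = (if t \<in> I then 1 else 0)"

lemma sum_ind_card:
  assumes "finite A"
  shows "(\<Sum>t\<in>A. if P t then 1 else (0::real)) = real (card {t\<in>A. P t})"
  using assms by (simp add: sum.If_cases Int_def conj_commute)

lemma GG_cong:
  assumes "\<And>t. t \<in> {1..n} \<Longrightarrow> \<phi> t = \<phi>' t" "\<And>r. r \<in> {1..n} \<Longrightarrow> \<psi> r = \<psi>' r"
    "\<And>t. t \<in> {1..n} \<Longrightarrow> \<sigma> t \<in> {1..n}"
  shows "GG n \<sigma> \<phi> \<psi> = GG n \<sigma> \<phi>' \<psi>'"
proof -
  have "(\<Sum>t\<in>{1..n}. \<phi> t * \<psi> (\<sigma> t)) = (\<Sum>t\<in>{1..n}. \<phi>' t * \<psi>' (\<sigma> t))"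
    using assms by (intro sum.cong) auto
  moreover have "(\<Sum>t\<in>{1..n}. \<phi> t) = (\<Sum>t\<in>{1..n}. \<phi>' t)" using assms by (intro sum.cong) auto
  moreover have "(\<Sum>t\<in>{1..n}. \<psi> t) = (\<Sum>t\<in>{1..n}. \<psi>' t)" using assms by (intro sum.cong) auto
  ultimately show ?thesis unfolding GG_def by simp
qed

lemma GG_left:
  "GG n \<sigma> (\<lambda>t. p1 t - p2 t + p3 t) \<psi> = GG n \<sigma> p1 \<psi> - GG n \<sigma> p2 \<psi> + GG n \<sigma> p3 \<psi>"
  unfolding GG_def by (simp add: sum.distrib sum_subtractf algebra_simps add_divide_distrib diff_divide_distrib)

lemma GG_right:
  "GG n \<sigma> \<phi> (\<lambda>t. p1 t - p2 t + p3 t) = GG n \<sigma> \<phi> p1 - GG n \<sigma> \<phi> p2 + GG n \<sigma> \<phi> p3"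
  unfolding GG_def by (simp add: sum.distrib sum_subtractf algebra_simps add_divide_distrib diff_divide_distrib)

lemma zn_interval_decomp:
  assumes n: "n \<ge> 1" and I: "zn_interval n I"
  shows "\<exists>u l w. \<forall>t\<in>{1..n}. ind I t = pre u t - pre l t + pre w t"
proof -
  obtain a b :: int where Ieq: "I = {t \<in> {1..n}. \<exists>i \<in> {a..b}. int t mod int n = i mod int n}"
    using I unfolding zn_interval_def by blast
  have n0: "int n > 0" using n by simp
  consider "b < a" | "b - a + 1 \<ge> int n" | "a \<le> b" "b - a + 1 < int n" by linarith
  then show ?thesis
  proof cases
    case 1
    hence "I = {}" unfolding Ieq by auto
    then show ?thesis by (intro exI[of _ 0]) (auto simp: ind_def pre_def)
  next
    case 2
    have "I = {1..n}"
    proof -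
      have "t \<in> I" if t: "t \<in> {1..n}" for t
      proof -
        define i where "i = a + (int t - a) mod int n"
        have "0 \<le> (int t - a) mod int n" "(int t - a) mod int n < int n" using n0 by auto
        hence "i \<in> {a..b}" using 2 unfolding i_def by auto
        moreover have "i mod int n = int t mod int n" unfolding i_def by (simp add: mod_add_right_eq)
        ultimately show ?thesis unfolding Ieq using t by (auto intro!: bexI[of _ i])
      qed
      then show ?thesis unfolding Ieq by auto
    qed
    then show ?thesis by (intro exI[of _ "int n"] exI[of _ 0]) (auto simp: ind_def pre_def)
  next
    case 3
    define q where "q = (a - 1) div int n"
    define a' where "a' = a - int n * q"
    define b' where "b' = b - int n * q"
    have a'eq: "a' = (a - 1) mod int n + 1" unfolding a'_def q_def
      using div_mult_mod_eq[of "a - 1" "int n"] by (simp add: algebra_simps)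
    have mb: "0 \<le> (a - 1) mod int n" "(a - 1) mod int n < int n" using n0 by simp_all
    have a'b: "1 \<le> a'" "a' \<le> int n" using a'eq mb by linarith+
    have b'b: "a' \<le> b'" "b' \<le> a' + int n - 2" using 3 unfolding a'_def b'_def by auto
    have key: "t \<in> I \<longleftrightarrow> (a' \<le> int t \<and> int t \<le> b') \<or> int t + int n \<le> b'" if t: "t \<in> {1..n}" for t
    proof
      assume "t \<in> I"
      then obtain i where i: "i \<in> {a..b}" "int t mod int n = i mod int n" unfolding Ieq by auto
      have tb: "1 \<le> int t" "int t \<le> int n" using t by auto
      define j where "j = i - int n * q"
      have j: "a' \<le> j" "j \<le> b'" using i(1) unfolding j_def a'_def b'_def by auto
      have "j mod int n = i mod int n" unfolding j_def by (simp add: mod_eq_dvd_iff)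
      hence "j mod int n = int t mod int n" using i(2) by simp
      hence "int n dvd j - int t" by (simp only: mod_eq_dvd_iff)
      then obtain k where k: "j - int t = int n * k" by (auto elim: dvdE)
      have k0: "k \<ge> 0"
      proof (rule ccontr)
        assume "\<not> k \<ge> 0"
        hence "int n * k \<le> int n * (-1)" using n0 by (intro mult_left_mono) auto
        then show False using k j a'b tb by linarith
      qed
      have k1: "k \<le> 1"
      proof (rule ccontr)
        assume "\<not> k \<le> 1"
        hence "int n * 2 \<le> int n * k" using n0 by (intro mult_left_mono) auto
        then show False using k j a'b b'b tb by linarith
      qed
      have "k = 0 \<or> k = 1" using k0 k1 by auto
      then show "(a' \<le> int t \<and> int t \<le> b') \<or> int t + int n \<le> b'" using k j by auto
    next
      assume h: "(a' \<le> int t \<and> int t \<le> b') \<or> int t + int n \<le> b'"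
      show "t \<in> I"
      proof (cases "a' \<le> int t \<and> int t \<le> b'")
        case True
        define i where "i = int t + int n * q"
        have "i \<in> {a..b}" using True unfolding i_def a'_def b'_def by auto
        moreover have "int t mod int n = i mod int n" unfolding i_def by (simp add: mod_eq_dvd_iff)
        ultimately show ?thesis unfolding Ieq using t by (auto intro!: bexI[of _ i])
      next
        case False
        hence h2: "int t + int n \<le> b'" using h by auto
        define i where "i = int t + int n + int n * q"
        have "i \<in> {a..b}" using h2 t a'b unfolding i_def a'_def b'_def by auto
        moreover have "int t mod int n = i mod int n" unfolding i_def by (simp add: mod_eq_dvd_iff)
        ultimately show ?thesis unfolding Ieq using t by (auto intro!: bexI[of _ i])
      qed
    qed
    show ?thesis
    proof (intro exI ballI)
      fix t assume t: "t \<in> {1..n}"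
      show "ind I t = pre b' t - pre (a' - 1) t + pre (b' - int n) t"
        unfolding ind_def pre_def key[OF t] using b'b a'b by auto
    qed
  qed
qed



lemma disc_GG:
  assumes irr: "a \<notin> \<rat>" and IJ: "I \<subseteq> {1..n}" "J \<subseteq> {1..n}"
  shows "disc n J (sos_perm a n ` I) = \<bar>GG n (sos_perm a n) (ind I) (ind J)\<bar>"
proof -
  let ?\<sigma> = "sos_perm a n"
  have inj: "inj_on ?\<sigma> I" using sos_inj[OF irr] IJ(1) by (rule inj_on_subset)
  have c1: "card (?\<sigma> ` I \<inter> J) = card {t\<in>I. ?\<sigma> t \<in> J}"
  proof -
    have "?\<sigma> ` I \<inter> J = ?\<sigma> ` {t\<in>I. ?\<sigma> t \<in> J}" by auto
    moreover have "inj_on ?\<sigma> {t\<in>I. ?\<sigma> t \<in> J}" using inj by (rule inj_on_subset) auto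
    ultimately show ?thesis by (simp add: card_image)
  qed
  have e1: "(\<Sum>t\<in>{1..n}. ind I t * ind J (?\<sigma> t)) = real (card {t\<in>I. ?\<sigma> t \<in> J})"
  proof -
    have "(\<Sum>t\<in>{1..n}. ind I t * ind J (?\<sigma> t)) = (\<Sum>t\<in>{1..n}. if t \<in> I \<and> ?\<sigma> t \<in> J then 1 else 0)"
      by (intro sum.cong) (auto simp: ind_def)
    also have "\<dots> = real (card {t\<in>{1..n}. t \<in> I \<and> ?\<sigma> t \<in> J})" by (rule sum_ind_card) simp
    also have "{t\<in>{1..n}. t \<in> I \<and> ?\<sigma> t \<in> J} = {t\<in>I. ?\<sigma> t \<in> J}" using IJ by auto
    finally show ?thesis .
  qed
  have e2: "(\<Sum>t\<in>{1..n}. ind I t) = real (card I)"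
  proof -
    have "(\<Sum>t\<in>{1..n}. ind I t) = real (card {t\<in>{1..n}. t \<in> I})" unfolding ind_def by (rule sum_ind_card) simp
    also have "{t\<in>{1..n}. t \<in> I} = I" using IJ by auto
    finally show ?thesis .
  qed
  have e3: "(\<Sum>t\<in>{1..n}. ind J t) = real (card J)"
  proof -
    have "(\<Sum>t\<in>{1..n}. ind J t) = real (card {t\<in>{1..n}. t \<in> J})" unfolding ind_def by (rule sum_ind_card) simp
    also have "{t\<in>{1..n}. t \<in> J} = J" using IJ by auto
    finally show ?thesis .
  qed
  have "card (?\<sigma> ` I) = card I" using inj by (rule card_image)
  then show ?thesis unfolding disc_def GG_def e1 e2 e3 c1 by simp
qed

lemma GG_pre_bound:
  assumes irr: "a \<notin> \<rat>" and eps: "\<epsilon> \<ge> 0" and n: "n \<ge> 1"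
    and K: "\<forall>u v. 0 \<le> v \<longrightarrow> v \<le> 1 \<longrightarrow> \<bar>real (card {t\<in>{1..u}. frac (a * real t) < v}) - real u * v\<bar> \<le> \<epsilon> * real u + K"
  shows "\<bar>GG n (sos_perm a n) (pre u) (pre w)\<bar> \<le> 2 * (\<epsilon> * real n + K)"
proof -
  let ?\<sigma> = "sos_perm a n"
  define u' where "u' = nat (min u (int n))"
  define w' where "w' = nat (min w (int n))"
  have u'n: "u' \<le> n" "w' \<le> n" unfolding u'_def w'_def by auto
  have s1: "(\<Sum>t\<in>{1..n}. pre u t) = real u'"
  proof -
    have "(\<Sum>t\<in>{1..n}. pre u t) = real (card {t\<in>{1..n}. int t \<le> u})" unfolding pre_def by (rule sum_ind_card) simp
    also have "{t\<in>{1..n}. int t \<le> u} = {1..u'}" unfolding u'_def by auto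
    finally show ?thesis by simp
  qed
  have s2: "(\<Sum>t\<in>{1..n}. pre w t) = real w'"
  proof -
    have "(\<Sum>t\<in>{1..n}. pre w t) = real (card {t\<in>{1..n}. int t \<le> w})" unfolding pre_def by (rule sum_ind_card) simp
    also have "{t\<in>{1..n}. int t \<le> w} = {1..w'}" unfolding w'_def by auto
    finally show ?thesis by simp
  qed
  obtain v where v: "0 \<le> v" "v \<le> 1" and cardS: "card {t\<in>{1..n}. ?\<sigma> t \<le> w'} = w'"
    and Seq: "{t\<in>{1..n}. ?\<sigma> t \<le> w'} = {t\<in>{1..n}. frac (a * real t) < v}"
    using rank_prefix[OF irr u'n(2)] by blast
  have s3: "(\<Sum>t\<in>{1..n}. pre u t * pre w (?\<sigma> t)) = real (card {t\<in>{1..u'}. frac (a * real t) < v})"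
  proof -
    have "(\<Sum>t\<in>{1..n}. pre u t * pre w (?\<sigma> t)) = (\<Sum>t\<in>{1..n}. if int t \<le> u \<and> int (?\<sigma> t) \<le> w then 1 else 0)"
      by (intro sum.cong) (auto simp: pre_def)
    also have "\<dots> = real (card {t\<in>{1..n}. int t \<le> u \<and> int (?\<sigma> t) \<le> w})" by (rule sum_ind_card) simp
    also have "{t\<in>{1..n}. int t \<le> u \<and> int (?\<sigma> t) \<le> w} = {t\<in>{1..u'}. frac (a * real t) < v}"
    proof (intro set_eqI iffI)
      fix t assume t: "t \<in> {t\<in>{1..n}. int t \<le> u \<and> int (?\<sigma> t) \<le> w}"
      have "?\<sigma> t \<in> {1..n}" using t sos_range by blast
      hence "?\<sigma> t \<le> w'" using t unfolding w'_def by auto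
      hence "t \<in> {t\<in>{1..n}. frac (a * real t) < v}" using t Seq by blast
      then show "t \<in> {t\<in>{1..u'}. frac (a * real t) < v}" using t unfolding u'_def by auto
    next
      fix t assume t: "t \<in> {t\<in>{1..u'}. frac (a * real t) < v}"
      hence tn: "t \<in> {1..n}" using u'n by auto
      hence "?\<sigma> t \<le> w'" using t Seq by blast
      moreover have "1 \<le> ?\<sigma> t" using tn sos_range by fastforce
      ultimately have "int (?\<sigma> t) \<le> int w'" "1 \<le> w'" by simp_all
      moreover have "int w' = min w (int n)" if "1 \<le> w'" using that unfolding w'_def by simp
      ultimately have "int (?\<sigma> t) \<le> w" by linarith
      then show "t \<in> {t\<in>{1..n}. int t \<le> u \<and> int (?\<sigma> t) \<le> w}" using t tn unfolding u'_def by auto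
    qed
    finally show ?thesis .
  qed
  define A where "A = real (card {t\<in>{1..u'}. frac (a * real t) < v})"
  have GGeq: "GG n ?\<sigma> (pre u) (pre w) = A - real u' * real w' / real n"
    unfolding GG_def s1 s2 s3 A_def by simp
  have b1: "\<bar>A - real u' * v\<bar> \<le> \<epsilon> * real n + K"
  proof -
    have "\<bar>A - real u' * v\<bar> \<le> \<epsilon> * real u' + K" using K v unfolding A_def by blast
    moreover have "\<epsilon> * real u' \<le> \<epsilon> * real n" using eps u'n by (intro mult_left_mono) auto
    ultimately show ?thesis by linarith
  qed
  have b2: "\<bar>real w' - real n * v\<bar> \<le> \<epsilon> * real n + K"
  proof -
    have "real w' = real (card {t\<in>{1..n}. frac (a * real t) < v})" using cardS Seq by simp
    then show ?thesis using K v by simp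
  qed
  have npos: "real n > 0" using n by simp
  have "real u' * v - real u' * real w' / real n = (real u' / real n) * (real n * v - real w')"
    using npos by (simp add: field_simps)
  hence "\<bar>real u' * v - real u' * real w' / real n\<bar> = (real u' / real n) * \<bar>real n * v - real w'\<bar>"
    by (simp add: abs_mult)
  also have "\<dots> \<le> 1 * \<bar>real n * v - real w'\<bar>"
    using u'n npos by (intro mult_right_mono) auto
  finally have b3': "\<bar>real u' * v - real u' * real w' / real n\<bar> \<le> \<bar>real n * v - real w'\<bar>" by simp
  have "\<bar>real n * v - real w'\<bar> = \<bar>real w' - real n * v\<bar>" by (rule abs_minus_commute)
  hence b3: "\<bar>real u' * v - real u' * real w' / real n\<bar> \<le> \<epsilon> * real n + K" using b2 b3' by linarith
  define X where "X = real u' * v"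
  define Y where "Y = real u' * real w' / real n"
  have "\<bar>A - Y\<bar> \<le> \<bar>A - X\<bar> + \<bar>X - Y\<bar>" using abs_triangle_ineq[of "A - X" "X - Y"] by simp
  moreover note b1 b3
  moreover define E where "E = \<epsilon> * real n + K"
  ultimately show ?thesis unfolding GGeq X_def[symmetric] Y_def[symmetric] E_def[symmetric] by linarith
qed



lemma tri3: "\<bar>(a::real) - b + c\<bar> \<le> \<bar>a\<bar> + \<bar>b\<bar> + \<bar>c\<bar>"
  by arith

lemma zn_interval_sub: "zn_interval n I \<Longrightarrow> I \<subseteq> {1..n}"
  unfolding zn_interval_def by auto

lemma disc_bound:
  assumes irr: "a \<notin> \<rat>" and eps: "\<epsilon> \<ge> 0" and n: "n \<ge> 1"
    and K: "\<forall>u v. 0 \<le> v \<longrightarrow> v \<le> 1 \<longrightarrow> \<bar>real (card {t\<in>{1..u}. frac (a * real t) < v}) - real u * v\<bar> \<le> \<epsilon> * real u + K"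
    and I: "zn_interval n I" and J: "zn_interval n J"
  shows "disc n J (sos_perm a n ` I) \<le> 18 * (\<epsilon> * real n + K)"
proof -
  let ?\<sigma> = "sos_perm a n"
  define g where "g x y = GG n ?\<sigma> (pre x) (pre y)" for x y
  define B where "B = 2 * (\<epsilon> * real n + K)"
  have gb: "\<bar>g x y\<bar> \<le> B" for x y unfolding g_def B_def by (rule GG_pre_bound[OF irr eps n K])
  obtain u1 l1 w1 where d1: "\<forall>t\<in>{1..n}. ind I t = pre u1 t - pre l1 t + pre w1 t"
    using zn_interval_decomp[OF n I] by blast
  obtain u2 l2 w2 where d2: "\<forall>t\<in>{1..n}. ind J t = pre u2 t - pre l2 t + pre w2 t"
    using zn_interval_decomp[OF n J] by blast
  have "GG n ?\<sigma> (ind I) (ind J) = GG n ?\<sigma> (\<lambda>t. pre u1 t - pre l1 t + pre w1 t) (\<lambda>t. pre u2 t - pre l2 t + pre w2 t)"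
    using d1 d2 sos_range by (intro GG_cong) auto
  also have "\<dots> = (g u1 u2 - g u1 l2 + g u1 w2) - (g l1 u2 - g l1 l2 + g l1 w2) + (g w1 u2 - g w1 l2 + g w1 w2)"
    unfolding g_def GG_left GG_right by simp
  finally have eq: "GG n ?\<sigma> (ind I) (ind J) = (g u1 u2 - g u1 l2 + g u1 w2) - (g l1 u2 - g l1 l2 + g l1 w2) + (g w1 u2 - g w1 l2 + g w1 w2)" .
  have r: "\<bar>g x u2 - g x l2 + g x w2\<bar> \<le> 3 * B" for x
    using tri3[of "g x u2" "g x l2" "g x w2"] gb[of x u2] gb[of x l2] gb[of x w2] by linarith
  have "\<bar>GG n ?\<sigma> (ind I) (ind J)\<bar> \<le> 9 * B"
    unfolding eq using tri3[of "g u1 u2 - g u1 l2 + g u1 w2" "g l1 u2 - g l1 l2 + g l1 w2" "g w1 u2 - g w1 l2 + g w1 w2"]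
      r[of u1] r[of l1] r[of w1] by linarith
  moreover have "disc n J (?\<sigma> ` I) = \<bar>GG n ?\<sigma> (ind I) (ind J)\<bar>"
    using disc_GG[OF irr zn_interval_sub[OF I] zn_interval_sub[OF J]] .
  ultimately show ?thesis unfolding B_def by simp
qed

lemma perm_disc_bound:
  assumes irr: "a \<notin> \<rat>" and eps: "\<epsilon> \<ge> 0" and n: "n \<ge> 1"
    and K: "\<forall>u v. 0 \<le> v \<longrightarrow> v \<le> 1 \<longrightarrow> \<bar>real (card {t\<in>{1..u}. frac (a * real t) < v}) - real u * v\<bar> \<le> \<epsilon> * real u + K"
  shows "0 \<le> perm_disc n (sos_perm a n) \<and> perm_disc n (sos_perm a n) \<le> 18 * (\<epsilon> * real n + K)"
proof -
  let ?\<sigma> = "sos_perm a n"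
  define S where "S = {disc n J (?\<sigma> ` I) | I J. zn_interval n I \<and> zn_interval n J}"
  have "S \<subseteq> (\<lambda>(I, J). disc n J (?\<sigma> ` I)) ` (Pow {1..n} \<times> Pow {1..n})"
    unfolding S_def using zn_interval_sub by fastforce
  hence fin: "finite S" by (rule finite_subset) simp
  have e: "zn_interval n {}" unfolding zn_interval_def by (intro exI[of _ 1] exI[of _ 0]) auto
  hence ne: "disc n {} (?\<sigma> ` {}) \<in> S" unfolding S_def by blast
  have "0 \<le> disc n {} (?\<sigma> ` {})" unfolding disc_def by simp
  also have "\<dots> \<le> Max S" using fin ne by (rule Max_ge)
  finally have "0 \<le> Max S" .
  moreover have "Max S \<le> 18 * (\<epsilon> * real n + K)"
    using fin ne disc_bound[OF irr eps n K] unfolding S_def by (subst Max_le_iff) auto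
  ultimately show ?thesis unfolding perm_disc_def S_def by simp
qed

theorem mainTheorem12:
  fixes \<alpha> :: real
  assumes "\<alpha> \<notin> \<rat>"
  shows "(\<lambda>n. perm_disc n (sos_perm \<alpha> n)) \<in> o(\<lambda>n. real n)"
proof (rule landau_o.smallI)
  fix c :: real assume c: "c > 0"
  define \<epsilon> where "\<epsilon> = c / 72"
  have eps: "\<epsilon> > 0" using c unfolding \<epsilon>_def by simp
  obtain K where K: "\<forall>u v. 0 \<le> v \<longrightarrow> v \<le> 1 \<longrightarrow> \<bar>real (card {t\<in>{1..u}. frac (\<alpha> * real t) < v}) - real u * v\<bar> \<le> \<epsilon> * real u + K"
    using count_uniform[OF assms eps] by blast
  have K0: "K \<ge> 0" using K[rule_format, of 0 0] by simp
  define N0 where "N0 = nat \<lceil>72 * K / c\<rceil> + 1"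
  show "\<forall>\<^sub>F n in at_top. norm (perm_disc n (sos_perm \<alpha> n)) \<le> c * norm (real n)"
    unfolding eventually_at_top_linorder
  proof (intro exI[of _ N0] allI impI)
    fix n assume nN: "N0 \<le> n"
    have n1: "n \<ge> 1" using nN unfolding N0_def by simp
    have "real n \<ge> 72 * K / c"
    proof -
      have "72 * K / c \<le> of_int \<lceil>72 * K / c\<rceil>" by (rule le_of_int_ceiling)
      also have "\<dots> \<le> real (nat \<lceil>72 * K / c\<rceil>)" by simp
      also have "\<dots> \<le> real n"
      proof -
        have "nat \<lceil>72 * K / c\<rceil> \<le> n" using nN unfolding N0_def by linarith
        then show ?thesis by (simp only: of_nat_le_iff)
      qed
      finally show ?thesis .
    qed
    hence Kn: "72 * K \<le> c * real n" using c by (simp add: field_simps)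
    have b: "0 \<le> perm_disc n (sos_perm \<alpha> n)" "perm_disc n (sos_perm \<alpha> n) \<le> 18 * (\<epsilon> * real n + K)"
      using perm_disc_bound[OF assms _ n1 K] eps by auto
    have "18 * (\<epsilon> * real n + K) = c * real n / 4 + 18 * K" unfolding \<epsilon>_def by (simp add: field_simps)
    also have "\<dots> \<le> c * real n"
    proof -
      have "0 \<le> c * real n" using c by simp
      moreover define M where "M = c * real n"
      ultimately show ?thesis using Kn unfolding M_def[symmetric] by linarith
    qed
    finally show "norm (perm_disc n (sos_perm \<alpha> n)) \<le> c * norm (real n)" using b by simp
  qed
qed


end
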